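(* Let $\rho\in\mathfrak M_d$, let $h$ be an interior point of $\mathcal H$ and let $k\in\mathcal H$. Then: (i) $\int y\,\eta_h(dy)=0$; (ii) for every bounded measurable $\varphi:\mathbb R^{d-1}\to\mathbb R$, $$\int\varphi(z)\,\eta_k(dz)=\int_{\{y:\,1+(k-h)^\top y>0\}}\varphi\Big(\frac{y}{1+(k-h)^\top y}\Big)\bigl(1+(k-h)^\top y\bigr)\,\eta_h(dy);$$ (iii) $\eta_h$ has bounded support.
   Context: Fix an integer $d\ge 2$. Let $H\in\mathbb R^{d\times(d-1)}$ have orthonormal columns spanning $T_d:=\{u\in\mathbb R^d:\mathbf 1^\top u=0\}$, and set $\gamma_i:=H^\top e_i\in\mathbb R^{d-1}$ ($i=1,\dots,d$). Let $\mathcal X_d:=\{x\in\mathbb R^{d-1}:1+\gamma_i^\top x\ge0\ \forall i\}$ and $\mathcal H:=\mathrm{conv}\{\gamma_1,\dots,\gamma_d\}$. An anchored law is a Borel probability measure $\rho$ on $\mathcal X_d$ with $\int x\,\rho(dx)=0$; $\mathfrak M_d$ is the set of anchored laws. For $h\in\mathcal H$ let $A_h:=\{x\in\mathcal X_d:1+h^\top x>0\}$ and $T_h(x):=x/(1+h^\top x)$ on $A_h$. For $\rho\in\mathfrak M_d$ and $h\in\mathcal H$, $q_h(dx):=(1+h^\top x)\rho(dx)$ is a probability measure (it vanishes outside $A_h$), and the projective fiber is the pushforward $\eta_h:=(T_h)_\#q_h$. *)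

theory Defs
  imports "HOL-Probability.Probability"
begin

text \<open>Dimension conventions: vectors of R^(d-1) have type real^'n, vectors of R^d
  have type real^'m, with CARD('m) = CARD('n) + 1 (so d = CARD('m) \<ge> 2).
  H :: real^'n^'m is the d x (d-1) matrix (rows indexed by 'm, columns by 'n).\<close>

definition gam :: "real^'n^'m \<Rightarrow> 'm \<Rightarrow> real^'n" where
  "gam H i = transpose H *v axis i 1"

definition Xd :: "real^'n^'m \<Rightarrow> (real^'n) set" where
  "Xd H = {x. \<forall>i. 1 + gam H i \<bullet> x \<ge> 0}"

definition Hcal :: "real^'n^'m \<Rightarrow> (real^'n) set" where
  "Hcal H = convex hull (range (gam H))"

definition admissible_H :: "real^'n^'m \<Rightarrow> bool" where
  "admissible_H H \<longleftrightarrow> transpose H ** H = mat 1 \<and>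
     span (range (\<lambda>j. column j H)) = {u. (\<Sum>i\<in>UNIV. u $ i) = 0}"

definition anchored :: "real^'n^'m \<Rightarrow> (real^'n) measure \<Rightarrow> bool" where
  "anchored H \<rho> \<longleftrightarrow> prob_space \<rho> \<and> sets \<rho> = sets borel \<and>
     (AE x in \<rho>. x \<in> Xd H) \<and> has_bochner_integral \<rho> (\<lambda>x. x) 0"

definition Ah :: "real^'n^'m \<Rightarrow> real^'n \<Rightarrow> (real^'n) set" where
  "Ah H h = {x \<in> Xd H. 1 + h \<bullet> x > 0}"

text \<open>T_h; its value outside A_h is irrelevant since q_h vanishes there.\<close>
definition Th :: "real^'n \<Rightarrow> real^'n \<Rightarrow> real^'n" where
  "Th h x = (if 1 + h \<bullet> x > 0 then (1 / (1 + h \<bullet> x)) *\<^sub>R x else 0)"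

definition qh :: "(real^'n) measure \<Rightarrow> real^'n \<Rightarrow> (real^'n) measure" where
  "qh \<rho> h = density \<rho> (\<lambda>x. ennreal (1 + h \<bullet> x))"

definition eta :: "(real^'n) measure \<Rightarrow> real^'n \<Rightarrow> (real^'n) measure" where
  "eta \<rho> h = distr (qh \<rho> h) borel (Th h)"

definition has_bounded_support :: "('a::metric_space) measure \<Rightarrow> bool" where
  "has_bounded_support M \<longleftrightarrow> (\<exists>B. bounded B \<and> (AE x in M. x \<in> B))"

end

theory Submission
  imports Defs
begin

lemma hull_nonneg:
  assumes "g \<in> Hcal H" "x \<in> Xd H"
  shows "0 \<le> 1 + g \<bullet> x"
proof -
  have eq: "{g. 0 \<le> 1 + g \<bullet> x} = {g. x \<bullet> g \<ge> -1}"
    by (auto simp: inner_commute)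
  have "convex {g. 0 \<le> 1 + g \<bullet> x}"
    unfolding eq by (rule convex_halfspace_ge)
  then have "Hcal H \<subseteq> {g. 0 \<le> 1 + g \<bullet> x}"
    unfolding Hcal_def using assms(2) by (intro hull_minimal) (auto simp: Xd_def)
  then show ?thesis using assms by auto
qed

lemma interior_bound:
  assumes "h \<in> interior (Hcal H)"
  obtains e where "e > 0" "\<And>x. x \<in> Xd H \<Longrightarrow> e * norm x \<le> 1 + h \<bullet> x"
proof -
  obtain e where e: "e > 0" "cball h e \<subseteq> Hcal H"
    using assms mem_interior_cball by blast
  have "e * norm x \<le> 1 + h \<bullet> x" if x: "x \<in> Xd H" for x
  proof (cases "x = 0")
    case True then show ?thesis by simp
  next
    case False
    let ?g = "h - (e / norm x) *\<^sub>R x"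
    have "?g \<in> cball h e" using e False by (simp add: dist_norm)
    then have "0 \<le> 1 + ?g \<bullet> x" using e hull_nonneg x by blast
    also have "?g \<bullet> x = h \<bullet> x - e * norm x"
      using False by (simp add: inner_diff_left power2_norm_eq_inner[symmetric] power2_eq_square)
    finally show ?thesis by simp
  qed
  then show ?thesis using e that by blast
qed

lemma Th_meas[measurable]: "Th g \<in> borel_measurable borel"
  unfolding Th_def by measurable

theorem proposition3p4:
  fixes H :: "real^'n^'m" and \<rho> :: "(real^'n) measure" and h k :: "real^'n"
  assumes "CARD('m) = CARD('n) + 1"
    and "admissible_H H"
    and "anchored H \<rho>"
    and "h \<in> interior (Hcal H)"
    and "k \<in> Hcal H"
  shows "has_bochner_integral (eta \<rho> h) (\<lambda>y. y) 0 \<and>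
         (\<forall>\<phi> :: real^'n \<Rightarrow> real. \<phi> \<in> borel_measurable borel \<longrightarrow> bounded (range \<phi>) \<longrightarrow>
          (\<integral>z. \<phi> z \<partial>eta \<rho> k) =
          (LINT y:{y. 1 + (k - h) \<bullet> y > 0}|eta \<rho> h.
              \<phi> ((1 / (1 + (k - h) \<bullet> y)) *\<^sub>R y) * (1 + (k - h) \<bullet> y))) \<and>
         has_bounded_support (eta \<rho> h)"
proof -
  have sets: "sets \<rho> = sets borel" and AEX: "AE x in \<rho>. x \<in> Xd H"
    and hb: "has_bochner_integral \<rho> (\<lambda>x. x) 0"
    using assms(3) unfolding anchored_def by auto
  have mcong: "measurable \<rho> N = measurable borel N" for N
    by (rule measurable_cong_sets[OF sets refl])
  have mcong2: "measurable (qh \<rho> g) N = measurable borel N" for g N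
    unfolding qh_def by (rule measurable_cong_sets) (auto simp: sets)
  obtain e where e: "e > 0" "\<And>x. x \<in> Xd H \<Longrightarrow> e * norm x \<le> 1 + h \<bullet> x"
    using interior_bound[OF assms(4)] by blast
  have hpos: "0 < 1 + h \<bullet> x" if "x \<in> Xd H" for x
  proof (cases "x = 0")
    case True then show ?thesis by simp
  next
    case False
    then have "0 < e * norm x" using e by simp
    then show ?thesis using e(2)[OF that] by linarith
  qed
  have kpos: "0 \<le> 1 + k \<bullet> x" if "x \<in> Xd H" for x
    using hull_nonneg[OF assms(5) that] .
  have Thm: "Th g \<in> measurable (qh \<rho> g') borel" for g g'
    unfolding mcong2 by simp
  have lin_m: "(\<lambda>x. 1 + g \<bullet> x) \<in> borel_measurable \<rho>" for g :: "real^'n"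
    unfolding mcong by simp
  have i: "has_bochner_integral (eta \<rho> h) (\<lambda>y. y) 0"
    unfolding eta_def
  proof (rule has_bochner_integral_distr[OF _ Thm])
    show "(\<lambda>y. y) \<in> borel_measurable borel" by simp
    show "has_bochner_integral (qh \<rho> h) (\<lambda>x. Th h x) 0"
      unfolding qh_def
    proof (rule has_bochner_integral_density)
      show "Th h \<in> borel_measurable \<rho>" unfolding mcong by simp
      show "(\<lambda>x. 1 + h \<bullet> x) \<in> borel_measurable \<rho>" by (rule lin_m)
      show "AE x in \<rho>. 0 \<le> 1 + h \<bullet> x"
        using AEX by eventually_elim (use hpos in force)
      have "has_bochner_integral \<rho> (\<lambda>x. (1 + h \<bullet> x) *\<^sub>R Th h x) 0 \<longleftrightarrow>
            has_bochner_integral \<rho> (\<lambda>x. x) 0"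
      proof (rule has_bochner_integral_cong_AE)
        show "(\<lambda>x. (1 + h \<bullet> x) *\<^sub>R Th h x) \<in> borel_measurable \<rho>" unfolding mcong by simp
        show "(\<lambda>x. x) \<in> borel_measurable \<rho>" unfolding mcong by simp
        show "AE x in \<rho>. (1 + h \<bullet> x) *\<^sub>R Th h x = x"
          using AEX by eventually_elim (use hpos in \<open>fastforce simp: Th_def\<close>)
      qed
      then show "has_bochner_integral \<rho> (\<lambda>x. (1 + h \<bullet> x) *\<^sub>R Th h x) 0" using hb by simp
    qed
  qed
  have ii: "(\<integral>z. \<phi> z \<partial>eta \<rho> k) =
          (LINT y:{y. 1 + (k - h) \<bullet> y > 0}|eta \<rho> h.
              \<phi> ((1 / (1 + (k - h) \<bullet> y)) *\<^sub>R y) * (1 + (k - h) \<bullet> y))"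
    if phim[measurable]: "\<phi> \<in> borel_measurable borel" for \<phi> :: "real^'n \<Rightarrow> real"
  proof -
    have "(\<integral>z. \<phi> z \<partial>eta \<rho> k) = (\<integral>x. (1 + k \<bullet> x) *\<^sub>R \<phi> (Th k x) \<partial>\<rho>)"
      unfolding eta_def qh_def
      apply (subst integral_distr)
        apply (rule Thm[unfolded qh_def])
       apply simp
      apply (rule integral_density)
        apply (simp add: mcong)
       apply (rule lin_m)
      using AEX by eventually_elim (use kpos in force)
    also have "\<dots> = (\<integral>x. (1 + h \<bullet> x) *\<^sub>R (indicator {y. 1 + (k - h) \<bullet> y > 0} (Th h x) *\<^sub>R
           (\<phi> ((1 / (1 + (k - h) \<bullet> Th h x)) *\<^sub>R Th h x) * (1 + (k - h) \<bullet> Th h x))) \<partial>\<rho>)"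
    proof (rule integral_cong_AE)
      show "(\<lambda>x. (1 + k \<bullet> x) *\<^sub>R \<phi> (Th k x)) \<in> borel_measurable \<rho>" unfolding mcong by simp
      show "(\<lambda>x. (1 + h \<bullet> x) *\<^sub>R (indicator {y. 1 + (k - h) \<bullet> y > 0} (Th h x) *\<^sub>R
           (\<phi> ((1 / (1 + (k - h) \<bullet> Th h x)) *\<^sub>R Th h x) * (1 + (k - h) \<bullet> Th h x)))) \<in> borel_measurable \<rho>"
        unfolding mcong by measurable
      show "AE x in \<rho>. (1 + k \<bullet> x) *\<^sub>R \<phi> (Th k x) = (1 + h \<bullet> x) *\<^sub>R (indicator {y. 1 + (k - h) \<bullet> y > 0} (Th h x) *\<^sub>R
           (\<phi> ((1 / (1 + (k - h) \<bullet> Th h x)) *\<^sub>R Th h x) * (1 + (k - h) \<bullet> Th h x)))"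
        using AEX
      proof eventually_elim
        case (elim x)
        define a where "a = 1 + h \<bullet> x"
        define b where "b = 1 + k \<bullet> x"
        have a: "a > 0" using hpos[OF elim] a_def by simp
        have b: "b \<ge> 0" using kpos[OF elim] b_def by simp
        have Thh: "Th h x = (1 / a) *\<^sub>R x" using a by (simp add: Th_def a_def)
        have key: "1 + (k - h) \<bullet> Th h x = b / a"
          using a by (simp add: Thh inner_diff_left a_def b_def field_simps)
        show ?case
        proof (cases "b > 0")
          case True
          have Thk: "Th k x = (1 / b) *\<^sub>R x" using True by (simp add: Th_def b_def)
          have arg: "(1 / (b / a)) *\<^sub>R Th h x = (1 / b) *\<^sub>R x"
            using a True by (simp add: Thh)
          have ind: "indicator {y. 0 < 1 + (k - h) \<bullet> y} (Th h x) = (1::real)"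
            using key a True by (simp add: indicator_def)
          have "a * (b / a) = b" using a by simp
          then show ?thesis unfolding ind key arg Thk b_def[symmetric] a_def[symmetric]
            using a by (simp add: mult.commute mult.left_commute)
        next
        case False
          then have "b = 0" using b by simp
          then show ?thesis unfolding key b_def[symmetric] a_def[symmetric] by simp
        qed
      qed
    qed
    also have "\<dots> = (LINT y:{y. 1 + (k - h) \<bullet> y > 0}|eta \<rho> h.
              \<phi> ((1 / (1 + (k - h) \<bullet> y)) *\<^sub>R y) * (1 + (k - h) \<bullet> y))"
      unfolding set_lebesgue_integral_def eta_def qh_def
      apply (subst integral_distr)
        apply (rule Thm[unfolded qh_def])
       apply measurable
      apply (rule integral_density[symmetric])
        apply (simp add: mcong)
       apply (rule lin_m)
      using AEX by eventually_elim (use hpos in force)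
    finally show ?thesis .
  qed
  have normTh: "norm (Th h x) \<le> 1 / e" if x: "x \<in> Xd H" for x
  proof -
    have a: "0 < 1 + h \<bullet> x" using hpos[OF x] .
    have "Th h x = (1 / (1 + h \<bullet> x)) *\<^sub>R x" using a by (simp add: Th_def)
    then have "norm (Th h x) = norm x / (1 + h \<bullet> x)" using a by simp
    also have "\<dots> \<le> 1 / e"
      using e(2)[OF x] a e(1) by (simp add: divide_simps mult.commute)
    finally show ?thesis .
  qed
  have iii: "has_bounded_support (eta \<rho> h)"
    unfolding has_bounded_support_def
  proof (intro exI conjI)
    show "bounded (cball (0::real^'n) (1 / e))" by (rule bounded_cball)
    have dens: "(\<lambda>x. ennreal (1 + h \<bullet> x)) \<in> borel_measurable \<rho>" unfolding mcong by measurable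
    have "AE x in \<rho>. 0 < ennreal (1 + h \<bullet> x) \<longrightarrow> Th h x \<in> cball 0 (1 / e)"
      using AEX by eventually_elim (use normTh in \<open>simp add: mem_cball_0\<close>)
    then have aeq: "AE x in qh \<rho> h. Th h x \<in> cball 0 (1 / e)"
      unfolding qh_def AE_density[OF dens] .
    have "{x \<in> space borel. x \<in> cball (0::real^'n) (1 / e)} \<in> sets borel"
      by (simp add: borel_closed)
    show "AE x in eta \<rho> h. x \<in> cball 0 (1 / e)"
      unfolding eta_def AE_distr_iff[OF Thm \<open>{x \<in> space borel. x \<in> cball 0 (1 / e)} \<in> sets borel\<close>] by (rule aeq)
  qed
  show ?thesis using i ii iii by blast
qed

end
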